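(* If two simple directed graphs $G_1=(V,D_1)$ and $G_2=(V,D_2)$ have the same Jacobian matroid and at least one of them is not complete, then they have the same sink nodes (nodes with no children).
   Context: A directed graph $G=(V,D)$ has edge set $D\subseteq V\times V$ of ordered pairs $(i,j)$, $i\neq j$. It is simple if $(i,j)$ and $(j,i)$ are never both in $D$. It is complete if every pair of distinct nodes is adjacent. $\Lambda$ is the $V\times V$ matrix with indeterminate entries $\lambda_{ij}$ for $(i,j)\in D$ and zeros elsewhere, and $s$ is a further indeterminate. Let $\psi_G(\Lambda,s)=s(I-\Lambda)(I-\Lambda)^T=K$. The transposed Jacobian $J(\psi_G)$ has rows indexed by $\{\lambda_{kl}:(k,l)\in D\}\cup\{s\}$ and columns indexed by $K_{ij}$, $i\le j$, with entries $\partial K_{ij}/\partial\theta$. The Jacobian matroid of $G$ is the matroid on the column labels in which a set is independent iff its columns are linearly independent over $\mathbb{R}(\lambda,s)$. *)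

theory Defs
  imports Complex_Main "HOL-Library.Poly_Mapping" "HOL-Library.Option_ord" "HOL-Library.Product_Lexorder"
          "HOL-Computational_Algebra.Fraction_Field"
begin

type_synonym 'x mpoly = "('x \<Rightarrow>\<^sub>0 nat) \<Rightarrow>\<^sub>0 real"

definition mvar :: "'x \<Rightarrow> 'x mpoly" where
  "mvar x = Poly_Mapping.single (Poly_Mapping.single x 1) 1"

definition pdiff :: "'x \<Rightarrow> 'x mpoly \<Rightarrow> 'x mpoly" where
  "pdiff x p = (\<Sum>m\<in>Poly_Mapping.keys p.
      Poly_Mapping.single (m - Poly_Mapping.single x 1)
        (Poly_Mapping.lookup p m * real (Poly_Mapping.lookup m x)))"

section \<open>Directed graphs on the vertex type 'v (V = UNIV)\<close>

definition simple_digraph :: "('v \<times> 'v) set \<Rightarrow> bool" where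
  "simple_digraph D \<longleftrightarrow> (\<forall>(i,j)\<in>D. i \<noteq> j \<and> (j,i) \<notin> D)"

definition complete_digraph :: "('v \<times> 'v) set \<Rightarrow> bool" where
  "complete_digraph D \<longleftrightarrow> (\<forall>i j. i \<noteq> j \<longrightarrow> (i,j) \<in> D \<or> (j,i) \<in> D)"

definition sinks :: "('v \<times> 'v) set \<Rightarrow> 'v set" where
  "sinks D = {i. \<forall>j. (i,j) \<notin> D}"

text \<open>Indeterminates: Some (k,l) stands for lambda_kl, None stands for s.\<close>

definition lam :: "('v \<times> 'v) set \<Rightarrow> 'v \<Rightarrow> 'v \<Rightarrow> ('v \<times> 'v) option mpoly" where
  "lam D i j = (if (i,j) \<in> D then mvar (Some (i,j)) else 0)"

definition IminusLam :: "('v \<times> 'v) set \<Rightarrow> 'v \<Rightarrow> 'v \<Rightarrow> ('v \<times> 'v) option mpoly" where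
  "IminusLam D i k = (if i = k then 1 else 0) - lam D i k"

text \<open>Entry K_ij of K = s (I - Lambda)(I - Lambda)^T.\<close>
definition Kentry :: "('v::finite \<times> 'v) set \<Rightarrow> 'v \<Rightarrow> 'v \<Rightarrow> ('v \<times> 'v) option mpoly" where
  "Kentry D i j = mvar None * (\<Sum>k\<in>UNIV. IminusLam D i k * IminusLam D j k)"

text \<open>Row labels of the transposed Jacobian: lambda_kl for (k,l) in D, and s.\<close>
definition jac_rows :: "('v \<times> 'v) set \<Rightarrow> ('v \<times> 'v) option set" where
  "jac_rows D = insert None (Some ` D)"

text \<open>Column labels: K_ij with i <= j.\<close>
definition jac_cols :: "('v::linorder \<times> 'v) set" where
  "jac_cols = {(i,j). i \<le> j}"

definition jac_entry :: "('v::finite \<times> 'v) set \<Rightarrow> ('v \<times> 'v) option \<Rightarrow> 'v \<times> 'v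
    \<Rightarrow> ('v \<times> 'v) option mpoly" where
  "jac_entry D \<theta> ij = pdiff \<theta> (Kentry D (fst ij) (snd ij))"

definition jac_indep :: "('v::{finite,linorder} \<times> 'v) set \<Rightarrow> ('v \<times> 'v) set \<Rightarrow> bool" where
  "jac_indep D S \<longleftrightarrow> S \<subseteq> jac_cols \<and>
     (\<forall>c :: 'v \<times> 'v \<Rightarrow> ('v \<times> 'v) option mpoly fract.
        (\<forall>\<theta>\<in>jac_rows D. (\<Sum>p\<in>S. c p * Fract (jac_entry D \<theta> p) 1) = 0)
        \<longrightarrow> (\<forall>p\<in>S. c p = 0))"

definition same_jacobian_matroid :: "('v::{finite,linorder} \<times> 'v) set \<Rightarrow> ('v \<times> 'v) set \<Rightarrow> bool" where
  "same_jacobian_matroid D1 D2 \<longleftrightarrow> (\<forall>S. jac_indep D1 S \<longleftrightarrow> jac_indep D2 S)"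

end

theory Submission
  imports Defs "Jordan_Normal_Form.Determinant"
begin

abbreviation sx :: "'x \<Rightarrow> 'x \<Rightarrow>\<^sub>0 nat" where "sx x \<equiv> Poly_Mapping.single x 1"

lemma lookup_pdiff:
  "Poly_Mapping.lookup (pdiff x p) m =
     Poly_Mapping.lookup p (m + sx x) * real (Poly_Mapping.lookup m x + 1)"
proof -
  have "Poly_Mapping.lookup (pdiff x p) m =
     (\<Sum>m'\<in>Poly_Mapping.keys p. (if m' - sx x = m then Poly_Mapping.lookup p m' * real (Poly_Mapping.lookup m' x) else 0))"
    unfolding pdiff_def lookup_sum lookup_single by (simp add: when_def)
  also have "\<dots> = (\<Sum>m'\<in>Poly_Mapping.keys p. (if m' = m + sx x then Poly_Mapping.lookup p m' * real (Poly_Mapping.lookup m' x) else 0))"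
  proof (rule sum.cong[OF refl])
    fix m' assume "m' \<in> Poly_Mapping.keys p"
    show "(if m' - sx x = m then Poly_Mapping.lookup p m' * real (Poly_Mapping.lookup m' x) else 0) =
          (if m' = m + sx x then Poly_Mapping.lookup p m' * real (Poly_Mapping.lookup m' x) else 0)"
    proof (cases "Poly_Mapping.lookup m' x = 0")
      case True
      then show ?thesis by (auto simp: poly_mapping_eq_iff fun_eq_iff lookup_add lookup_single when_def)
    next
      case False
      have "(m' - sx x = m) = (m' = m + sx x)"
        using False by (auto simp: poly_mapping_eq_iff fun_eq_iff lookup_add lookup_minus lookup_single when_def)
      then show ?thesis by simp
    qed
  qed
  also have "\<dots> = Poly_Mapping.lookup p (m + sx x) * real (Poly_Mapping.lookup m x + 1)"
    by (simp add: sum.delta lookup_add in_keys_iff)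
  finally show ?thesis .
qed

lemma pdiff_add: "pdiff x (p + q) = pdiff x p + pdiff x q"
  by (rule poly_mapping_eqI) (simp add: lookup_pdiff lookup_add algebra_simps)
lemma pdiff_minus: "pdiff x (p - q) = pdiff x p - pdiff x q"
  by (rule poly_mapping_eqI) (simp add: lookup_pdiff lookup_minus algebra_simps)
lemma pdiff_uminus: "pdiff x (- q) = - pdiff x q"
  by (rule poly_mapping_eqI) (simp add: lookup_pdiff)
lemma pdiff_zero: "pdiff x 0 = 0"
  by (rule poly_mapping_eqI) (simp add: lookup_pdiff)
lemma pdiff_sum: "pdiff x (sum f A) = (\<Sum>a\<in>A. pdiff x (f a))"
  by (induction A rule: infinite_finite_induct) (auto simp: pdiff_zero pdiff_add)

lemma lookup_single_mult:
  "Poly_Mapping.lookup (Poly_Mapping.single k c * p) m =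
     (if (\<exists>q. m = k + q) then c * Poly_Mapping.lookup p (m - k) else 0)"
  for k :: "'x \<Rightarrow>\<^sub>0 nat" and p :: "('x \<Rightarrow>\<^sub>0 nat) \<Rightarrow>\<^sub>0 real"
proof -
  have "Poly_Mapping.lookup (Poly_Mapping.single k c * p) m =
     c * (\<Sum>q. Poly_Mapping.lookup p q when m = k + q)"
    unfolding lookup_mult lookup_single by (simp only: when_mult Sum_any_when_equal')
  also have "\<dots> = (if (\<exists>q. m = k + q) then c * Poly_Mapping.lookup p (m - k) else 0)"
  proof (cases "\<exists>q. m = k + q")
    case True
    then obtain q0 where q0: "m = k + q0" by blast
    have e1: "(\<lambda>q. Poly_Mapping.lookup p q when m = k + q) = (\<lambda>q. Poly_Mapping.lookup p q when q = q0)"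
      using q0 by (auto simp: fun_eq_iff when_def)
    have e2: "(\<Sum>q. Poly_Mapping.lookup p q when m = k + q) = Poly_Mapping.lookup p q0"
      unfolding e1 by (rule Sum_any_when_equal)
    have "m - k = q0" using q0 by simp
    then show ?thesis using True e2 by simp
  next
    case False
    then show ?thesis by (simp add: when_def)
  qed
  finally show ?thesis .
qed

lemma pdiff_const_mult:
  "pdiff x (Poly_Mapping.single 0 c * p) = Poly_Mapping.single 0 c * pdiff x p"
  by (rule poly_mapping_eqI) (simp add: lookup_pdiff lookup_single_mult)

lemma lookup_mvar_mult:
  "Poly_Mapping.lookup (mvar y * p) m =
     (if (\<exists>q. m = sx y + q) then Poly_Mapping.lookup p (m - sx y) else 0)"
  unfolding mvar_def lookup_single_mult by simp

lemma ex_sx_iff: "(\<exists>q. m = sx y + q) \<longleftrightarrow> Poly_Mapping.lookup m y \<noteq> 0"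
proof
  assume "\<exists>q. m = sx y + q"
  then obtain q where "m = sx y + q" by blast
  then show "Poly_Mapping.lookup m y \<noteq> 0" by (simp add: lookup_add)
next
  assume a: "Poly_Mapping.lookup m y \<noteq> 0"
  have "m = sx y + (m - sx y)"
    by (rule poly_mapping_eqI) (use a in \<open>auto simp: lookup_add lookup_minus lookup_single when_def\<close>)
  then show "\<exists>q. m = sx y + q" by blast
qed

lemma lookup_sx_add_minus: "Poly_Mapping.lookup m y \<noteq> 0 \<Longrightarrow> m - sx y + sx y = m"
  by (rule poly_mapping_eqI) (auto simp: lookup_add lookup_minus lookup_single when_def)

lemma pdiff_mvar_mult:
  "pdiff x (mvar y * p) = (if x = y then p else 0) + mvar y * pdiff x p"
proof (rule poly_mapping_eqI)
  fix m
  let ?L = "Poly_Mapping.lookup"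
  have lhs: "?L (pdiff x (mvar y * p)) m =
     (if ?L (m + sx x) y \<noteq> 0 then ?L p (m + sx x - sx y) else 0) * real (?L m x + 1)"
    by (simp only: lookup_pdiff lookup_mvar_mult ex_sx_iff)
  have rhs: "?L ((if x = y then p else 0) + mvar y * pdiff x p) m =
     (if x = y then ?L p m else 0) +
     (if ?L m y \<noteq> 0 then ?L p (m - sx y + sx x) * real (?L (m - sx y) x + 1) else 0)"
    by (simp only: lookup_add lookup_mvar_mult ex_sx_iff lookup_pdiff) simp
  show "?L (pdiff x (mvar y * p)) m = ?L ((if x = y then p else 0) + mvar y * pdiff x p) m"
  proof (cases "x = y")
    case True
    have a1: "?L (m + sx x) y \<noteq> 0" using True by (simp add: lookup_add)
    have a2: "m + sx x - sx y = m" using True by simp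
    show ?thesis
    proof (cases "?L m y = 0")
      case True
      with \<open>x = y\<close> show ?thesis unfolding lhs rhs using a1 a2 by simp
    next
      case False
      have "?L (m - sx y) x + 1 = ?L m x" using False \<open>x = y\<close> by (simp add: lookup_minus)
      moreover have "m - sx y + sx x = m" using lookup_sx_add_minus[OF False] \<open>x = y\<close> by simp
      ultimately show ?thesis unfolding lhs rhs using a1 a2 \<open>x = y\<close> False
        by (simp add: distrib_left)
    qed
  next
    case False
    have b1: "?L (m + sx x) y = ?L m y" using False by (simp add: lookup_add lookup_single)
    have b2: "?L (m - sx y) x = ?L m x" using False by (simp add: lookup_minus lookup_single)
    have b3: "?L m y \<noteq> 0 \<Longrightarrow> m + sx x - sx y = m - sx y + sx x"
      by (rule poly_mapping_eqI) (auto simp: lookup_add lookup_minus lookup_single when_def)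
    show ?thesis unfolding lhs rhs using False b1 b2 b3 by simp
  qed
qed


definition mono :: "('x \<Rightarrow> real) \<Rightarrow> ('x \<Rightarrow>\<^sub>0 nat) \<Rightarrow> real" where
  "mono f m = (\<Prod>x\<in>Poly_Mapping.keys m. f x ^ Poly_Mapping.lookup m x)"

definition ev :: "('x \<Rightarrow> real) \<Rightarrow> 'x mpoly \<Rightarrow> real" where
  "ev f p = (\<Sum>m\<in>Poly_Mapping.keys p. Poly_Mapping.lookup p m * mono f m)"

lemma mono_alt:
  assumes "finite K" "Poly_Mapping.keys m \<subseteq> K"
  shows "mono f m = (\<Prod>x\<in>K. f x ^ Poly_Mapping.lookup m x)"
  unfolding mono_def
  by (rule prod.mono_neutral_left[OF assms(1,2)]) (auto simp: in_keys_iff)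

lemma mono_add: "mono f (m + n) = mono f m * mono f n"
proof -
  let ?K = "Poly_Mapping.keys m \<union> Poly_Mapping.keys n"
  have "mono f (m + n) = (\<Prod>x\<in>?K. f x ^ Poly_Mapping.lookup (m + n) x)"
    using keys_add[of m n] by (intro mono_alt) auto
  also have "\<dots> = (\<Prod>x\<in>?K. f x ^ Poly_Mapping.lookup m x) * (\<Prod>x\<in>?K. f x ^ Poly_Mapping.lookup n x)"
    by (simp add: lookup_add power_add prod.distrib)
  also have "\<dots> = mono f m * mono f n"
    by (subst (1 2) mono_alt[of ?K]) auto
  finally show ?thesis .
qed

lemma mono_zero [simp]: "mono f 0 = 1"
  by (simp add: mono_def)

lemma ev_alt:
  assumes "finite K" "Poly_Mapping.keys p \<subseteq> K"
  shows "ev f p = (\<Sum>m\<in>K. Poly_Mapping.lookup p m * mono f m)"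
  unfolding ev_def
  by (rule sum.mono_neutral_left[OF assms(1,2)]) (auto simp: in_keys_iff)

lemma ev_add: "ev f (p + q) = ev f p + ev f q"
proof -
  let ?K = "Poly_Mapping.keys p \<union> Poly_Mapping.keys q"
  have "ev f (p + q) = (\<Sum>m\<in>?K. Poly_Mapping.lookup (p + q) m * mono f m)"
    using keys_add[of p q] by (intro ev_alt) auto
  also have "\<dots> = (\<Sum>m\<in>?K. Poly_Mapping.lookup p m * mono f m) + (\<Sum>m\<in>?K. Poly_Mapping.lookup q m * mono f m)"
    by (simp add: lookup_add distrib_right sum.distrib)
  also have "\<dots> = ev f p + ev f q"
    by (subst (1 2) ev_alt[of ?K]) auto
  finally show ?thesis .
qed

lemma ev_zero [simp]: "ev f 0 = 0"
  by (simp add: ev_def)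

lemma ev_single [simp]: "ev f (Poly_Mapping.single m c) = c * mono f m"
  by (simp add: ev_def)

lemma ev_sum: "ev f (sum g A) = (\<Sum>a\<in>A. ev f (g a))"
  by (induction A rule: infinite_finite_induct) (auto simp: ev_add)

lemma poly_expand: "p = (\<Sum>m\<in>Poly_Mapping.keys p. Poly_Mapping.single m (Poly_Mapping.lookup p m))"
  by (rule poly_mapping_eqI) (simp add: lookup_sum lookup_single when_def sum.delta in_keys_iff)

lemma ev_mult: "ev f (p * q) = ev f p * ev f q"
proof -
  let ?Kp = "Poly_Mapping.keys p" and ?Kq = "Poly_Mapping.keys q"
  let ?L = "Poly_Mapping.lookup"
  have "p * q = (\<Sum>m\<in>?Kp. Poly_Mapping.single m (?L p m)) * (\<Sum>n\<in>?Kq. Poly_Mapping.single n (?L q n))"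
    by (subst (1) poly_expand, subst (1) poly_expand[of q]) rule
  also have "\<dots> = (\<Sum>m\<in>?Kp. \<Sum>n\<in>?Kq. Poly_Mapping.single (m + n) (?L p m * ?L q n))"
    by (simp add: sum_product mult_single)
  finally have "ev f (p * q) = (\<Sum>m\<in>?Kp. \<Sum>n\<in>?Kq. (?L p m * ?L q n) * mono f (m + n))"
    by (simp add: ev_sum)
  also have "\<dots> = (\<Sum>m\<in>?Kp. ?L p m * mono f m) * (\<Sum>n\<in>?Kq. ?L q n * mono f n)"
    by (simp add: sum_product mono_add mult_ac)
  also have "\<dots> = ev f p * ev f q" by (simp add: ev_def)
  finally show ?thesis .
qed

lemma ev_one [simp]: "ev f 1 = 1"
proof -
  have "(1 :: 'x mpoly) = Poly_Mapping.single 0 1" by simp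
  then show ?thesis by (metis ev_single mono_zero mult_1)
qed

lemma ev_hom: "comm_ring_hom (ev f)"
  by unfold_locales (auto simp: ev_add ev_mult)

lemma ev_minus: "ev f (p - q) = ev f p - ev f q"
  by (metis ev_add diff_add_cancel eq_diff_eq)

lemma ev_uminus: "ev f (- q) = - ev f q"
  using ev_minus[of f 0 q] by simp

lemma ev_mvar [simp]: "ev f (mvar x) = f x"
proof -
  have "mono f (sx x) = f x" by (simp add: mono_def)
  then show ?thesis by (simp add: mvar_def)
qed

lemma ev_of_nat: "ev f (of_nat n) = of_nat n"
  by (induction n) (simp_all add: ev_add)


definition lin_indep :: "'r set \<Rightarrow> 'c set \<Rightarrow> ('r \<Rightarrow> 'c \<Rightarrow> 'k::field) \<Rightarrow> bool" where
  "lin_indep R S v \<longleftrightarrow> (\<forall>c. (\<forall>\<theta>\<in>R. (\<Sum>p\<in>S. c p * v \<theta> p) = 0) \<longrightarrow> (\<forall>p\<in>S. c p = 0))"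

lemma sum_reindex_enum:
  assumes "bij_betw q {0..<n} S"
  shows "(\<Sum>j = 0..<n. g (q j)) = (\<Sum>p\<in>S. g p)"
  using sum.reindex_bij_betw[OF assms] .

lemma mat_vec_sum:
  assumes "i < n"
  shows "(mat n n (\<lambda>(i, j). a i j) *\<^sub>v vec n x) $ i = (\<Sum>j = 0..<n. a i j * x j)"
  using assms by (simp add: scalar_prod_def)

lemma lin_dep_card:
  fixes v :: "'r \<Rightarrow> 'c \<Rightarrow> 'k::field"
  assumes fR: "finite R" and fS: "finite S" and lt: "card R < card S"
  shows "\<not> lin_indep R S v"
proof
  assume ind: "lin_indep R S v"
  define n where "n = card S"
  define m where "m = card R"
  obtain r where r: "bij_betw r {0..<m} R" using ex_bij_betw_nat_finite[OF fR] m_def by blast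
  obtain q where q: "bij_betw q {0..<n} S" using ex_bij_betw_nat_finite[OF fS] n_def by blast
  have mn: "m < n" using lt m_def n_def by simp
  define c where "c i = (if i < m then vec n (\<lambda>j. v (r i) (q j)) else 0\<^sub>v n)" for i
  define A where "A = mat\<^sub>r n n c"
  have A: "A \<in> carrier_mat n n" unfolding A_def by simp
  have eqA: "A = mat\<^sub>r n n (\<lambda>i. if i = n - 1 then 0\<^sub>v n else c i)"
    unfolding A_def by (rule eq_matI) (use mn in \<open>auto simp: c_def\<close>)
  have "det (mat\<^sub>r n n (\<lambda>i. if i = n - 1 then 0\<^sub>v n else c i)) = 0"
    by (rule det_row_0) (use mn in \<open>auto simp: c_def\<close>)
  then have "det A = 0" using eqA by simp
  then obtain x where x: "x \<in> carrier_vec n" "x \<noteq> 0\<^sub>v n" "A *\<^sub>v x = 0\<^sub>v n"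
    using det_0_iff_vec_prod_zero_field[OF A] by blast
  define cf where "cf p = x $ (inv_into {0..<n} q p)" for p
  have cfq: "cf (q j) = x $ j" if "j < n" for j
    using that q unfolding cf_def bij_betw_def by (simp add: inv_into_f_f)
  have rel: "\<forall>\<theta>\<in>R. (\<Sum>p\<in>S. cf p * v \<theta> p) = 0"
  proof
    fix \<theta> assume "\<theta> \<in> R"
    then obtain i where i: "i < m" "\<theta> = r i" using r unfolding bij_betw_def by auto
    have "0 = (A *\<^sub>v x) $ i" using x(3) i mn by simp
    also have "\<dots> = (\<Sum>j = 0..<n. v (r i) (q j) * x $ j)"
      using i mn x(1) by (simp add: A_def c_def scalar_prod_def)
    also have "\<dots> = (\<Sum>j = 0..<n. cf (q j) * v (r i) (q j))"
      by (rule sum.cong) (auto simp: cfq)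
    also have "\<dots> = (\<Sum>p\<in>S. cf p * v \<theta> p)"
      using sum_reindex_enum[OF q, of "\<lambda>p. cf p * v (r i) p"] i by simp
    finally show "(\<Sum>p\<in>S. cf p * v \<theta> p) = 0" by simp
  qed
  then have "\<forall>p\<in>S. cf p = 0" using ind unfolding lin_indep_def by blast
  then have "\<forall>j<n. x $ j = 0" using q cfq unfolding bij_betw_def by auto
  then have "x = 0\<^sub>v n" using x(1) by (intro eq_vecI) auto
  with x(2) show False by simp
qed

lemma lin_indep_specialize:
  fixes w :: "'r \<Rightarrow> 'c \<Rightarrow> 'a::idom" and h :: "'a \<Rightarrow> 'k::field"
  assumes hom: "comm_ring_hom h"
    and fR: "finite R" and fS: "finite S" and eq: "card R = card S"
    and ind: "lin_indep R S (\<lambda>\<theta> p. h (w \<theta> p))"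
  shows "lin_indep R S (\<lambda>\<theta> p. to_fract (w \<theta> p))"
proof -
  interpret hh: comm_ring_hom h by (rule hom)
  define n where "n = card S"
  obtain r where r: "bij_betw r {0..<n} R" using ex_bij_betw_nat_finite[OF fR] n_def eq by metis
  obtain q where q: "bij_betw q {0..<n} S" using ex_bij_betw_nat_finite[OF fS] n_def by blast
  define A where "A = mat n n (\<lambda>(i, j). w (r i) (q j))"
  have A: "A \<in> carrier_mat n n" unfolding A_def by simp
  have hA: "map_mat h A \<in> carrier_mat n n" using A by simp
  have "det (map_mat h A) \<noteq> 0"
  proof
    assume "det (map_mat h A) = 0"
    then obtain x where x: "x \<in> carrier_vec n" "x \<noteq> 0\<^sub>v n" "map_mat h A *\<^sub>v x = 0\<^sub>v n"
      using det_0_iff_vec_prod_zero_field[OF hA] by blast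
    define cf where "cf p = x $ (inv_into {0..<n} q p)" for p
    have cfq: "cf (q j) = x $ j" if "j < n" for j
      using that q unfolding cf_def bij_betw_def by (simp add: inv_into_f_f)
    have "\<forall>\<theta>\<in>R. (\<Sum>p\<in>S. cf p * h (w \<theta> p)) = 0"
    proof
      fix \<theta> assume "\<theta> \<in> R"
      then obtain i where i: "i < n" "\<theta> = r i" using r unfolding bij_betw_def by auto
      have "0 = (map_mat h A *\<^sub>v x) $ i" using x(3) i by simp
      also have "\<dots> = (\<Sum>j = 0..<n. h (w (r i) (q j)) * x $ j)"
        using i x(1) by (simp add: A_def scalar_prod_def)
      also have "\<dots> = (\<Sum>j = 0..<n. cf (q j) * h (w (r i) (q j)))"
        by (rule sum.cong) (auto simp: cfq)
      also have "\<dots> = (\<Sum>p\<in>S. cf p * h (w \<theta> p))"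
        using sum_reindex_enum[OF q, of "\<lambda>p. cf p * h (w (r i) p)"] i by simp
      finally show "(\<Sum>p\<in>S. cf p * h (w \<theta> p)) = 0" by simp
    qed
    then have "\<forall>p\<in>S. cf p = 0" using ind unfolding lin_indep_def by blast
    then have "\<forall>j<n. x $ j = 0" using q cfq unfolding bij_betw_def by auto
    then have "x = 0\<^sub>v n" using x(1) by (intro eq_vecI) auto
    with x(2) show False by simp
  qed
  then have "h (det A) \<noteq> 0" using comm_ring_hom.hom_det[OF hom] by metis
  then have dA: "det A \<noteq> 0" using hh.hom_zero by metis
  interpret tf: inj_comm_ring_hom "to_fract :: 'a \<Rightarrow> 'a fract" by (unfold_locales, auto)
  have fA: "map_mat to_fract A \<in> carrier_mat n n" using A by simp
  have dfA: "det (map_mat to_fract A) \<noteq> 0" using dA by simp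
  show ?thesis unfolding lin_indep_def
  proof (intro allI impI)
    fix cf :: "'c \<Rightarrow> 'a fract"
    assume rel: "\<forall>\<theta>\<in>R. (\<Sum>p\<in>S. cf p * to_fract (w \<theta> p)) = 0"
    define x where "x = vec n (\<lambda>j. cf (q j))"
    have x: "x \<in> carrier_vec n" unfolding x_def by simp
    have "map_mat to_fract A *\<^sub>v x = 0\<^sub>v n"
    proof (rule eq_vecI)
      fix i assume "i < dim_vec (0\<^sub>v n :: 'a fract vec)"
      then have i: "i < n" by simp
      have "(map_mat to_fract A *\<^sub>v x) $ i = (\<Sum>j = 0..<n. to_fract (w (r i) (q j)) * cf (q j))"
        using i by (simp add: A_def x_def scalar_prod_def)
      also have "\<dots> = (\<Sum>p\<in>S. cf p * to_fract (w (r i) p))"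
        using sum_reindex_enum[OF q, of "\<lambda>p. cf p * to_fract (w (r i) p)"] by (simp add: mult.commute)
      also have "\<dots> = 0" using rel i r unfolding bij_betw_def by auto
      finally show "(map_mat to_fract A *\<^sub>v x) $ i = 0\<^sub>v n $ i" using i by simp
    qed (simp add: A_def)
    then have "x = 0\<^sub>v n" using det_0_iff_vec_prod_zero_field[OF fA] dfA x by blast
    then have "\<forall>j<n. cf (q j) = 0" unfolding x_def by (metis index_vec index_zero_vec(1))
    then show "\<forall>p\<in>S. cf p = 0" using q unfolding bij_betw_def by auto
  qed
qed


lemma pdiff_one: "pdiff x (1 :: 'x mpoly) = 0"
proof (rule poly_mapping_eqI)
  fix m
  have "Poly_Mapping.lookup (m + sx x) x \<noteq> 0" by (simp add: lookup_add)
  then have "m + sx x \<noteq> 0" by auto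
  then show "Poly_Mapping.lookup (pdiff x (1 :: 'x mpoly)) m = Poly_Mapping.lookup 0 m"
    by (simp add: lookup_pdiff lookup_one)
qed

lemma pdiff_mvar: "pdiff x (mvar y) = (if x = y then 1 else 0)"
  using pdiff_mvar_mult[of x y 1] by (simp add: pdiff_one)

lemma pdiff_IL_mult:
  "pdiff x (IminusLam D a k * q) =
     IminusLam D a k * pdiff x q - (if (a,k) \<in> D \<and> x = Some (a,k) then q else 0)"
proof -
  have e: "IminusLam D a k * q = (if a = k then q else 0) - lam D a k * q"
    by (simp add: IminusLam_def algebra_simps)
  have l: "pdiff x (lam D a k * q) = (if (a,k) \<in> D \<and> x = Some (a,k) then q else 0) + lam D a k * pdiff x q"
    by (cases "(a,k) \<in> D") (auto simp: lam_def pdiff_mvar_mult pdiff_zero)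
  have e2: "IminusLam D a k * pdiff x q = (if a = k then pdiff x q else 0) - lam D a k * pdiff x q"
    by (simp add: IminusLam_def algebra_simps)
  have i: "pdiff x (if a = k then q else 0) = (if a = k then pdiff x q else 0)"
    by (simp add: pdiff_zero)
  show ?thesis
    unfolding e pdiff_minus l e2 i by (simp add: algebra_simps)
qed

definition QQ :: "('v::finite \<times> 'v) set \<Rightarrow> 'v \<Rightarrow> 'v \<Rightarrow> ('v \<times> 'v) option mpoly" where
  "QQ D a b = (\<Sum>k\<in>UNIV. IminusLam D a k * IminusLam D b k)"

lemma pdiff_IL: "pdiff x (IminusLam D a k) = - (if (a,k) \<in> D \<and> x = Some (a,k) then 1 else 0)"
  using pdiff_IL_mult[of x D a k 1] by (simp add: pdiff_one)

lemma pdiff_QQ_None: "pdiff None (QQ D a b) = 0"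
  unfolding QQ_def pdiff_sum by (simp add: pdiff_IL_mult pdiff_IL)

lemma sum_delta_cond:
  fixes f :: "'v::finite \<Rightarrow> 'a::comm_monoid_add"
  shows "(\<Sum>k\<in>UNIV. (if P k \<and> k = w then f k else 0)) = (if P w then f w else 0)"
proof -
  have "(\<Sum>k\<in>UNIV. (if P k \<and> k = w then f k else 0)) = (\<Sum>k\<in>UNIV. (if k = w then (if P w then f w else 0) else 0))"
    by (rule sum.cong) auto
  then show ?thesis by simp
qed

lemma pdiff_QQ_Some:
  "pdiff (Some (u,w)) (QQ D a b) =
     - ((if a = u \<and> (u,w) \<in> D then IminusLam D b w else 0) +
        (if b = u \<and> (u,w) \<in> D then IminusLam D a w else 0))"
proof -
  have "pdiff (Some (u,w)) (QQ D a b) =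
    (\<Sum>k\<in>UNIV. - (if (b = u \<and> (u,w) \<in> D) \<and> k = w then IminusLam D a k else 0)
               - (if (a = u \<and> (u,w) \<in> D) \<and> k = w then IminusLam D b k else 0))"
    unfolding QQ_def pdiff_sum
    by (rule sum.cong) (auto simp: pdiff_IL_mult pdiff_IL)
  also have "\<dots> = - (if b = u \<and> (u,w) \<in> D then IminusLam D a w else 0)
                 - (if a = u \<and> (u,w) \<in> D then IminusLam D b w else 0)"
    by (simp only: sum_subtractf sum_negf sum_delta_cond)
  finally show ?thesis by simp
qed

lemma Kentry_QQ: "Kentry D a b = mvar None * QQ D a b"
  by (simp add: Kentry_def QQ_def)

lemma je_None: "jac_entry D None (a,b) = QQ D a b"
  by (simp add: jac_entry_def Kentry_QQ pdiff_mvar_mult pdiff_QQ_None)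

lemma je_Some: "jac_entry D (Some (u,w)) (a,b) =
   - mvar None * ((if a = u \<and> (u,w) \<in> D then IminusLam D b w else 0) +
        (if b = u \<and> (u,w) \<in> D then IminusLam D a w else 0))"
  by (simp add: jac_entry_def Kentry_QQ pdiff_mvar_mult pdiff_QQ_Some)

lemma ev_IL: "ev f (IminusLam D a k) = (if a = k then 1 else 0) - (if (a,k) \<in> D then f (Some (a,k)) else 0)"
  by (simp add: IminusLam_def lam_def ev_minus)

lemma ev_QQ: "ev f (QQ D a b) = (\<Sum>k\<in>UNIV. ev f (IminusLam D a k) * ev f (IminusLam D b k))"
  by (simp add: QQ_def ev_sum ev_mult)


definition ec :: "'v::linorder \<Rightarrow> 'v \<Rightarrow> 'v \<times> 'v" where "ec a b = (min a b, max a b)"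

definition f0 :: "('v \<times> 'v) option \<Rightarrow> real" where "f0 x = (if x = None then 1 else 0)"

definition fi :: "'v \<Rightarrow> ('v \<times> 'v) option \<Rightarrow> real" where
  "fi i x = (case x of None \<Rightarrow> 1 | Some (a, b) \<Rightarrow> if b = i then 1 else 0)"

lemma ev_je_Some:
  "ev f (jac_entry D (Some (u,w)) (x,y)) =
     - f None * ((if x = u \<and> (u,w) \<in> D then ev f (IminusLam D y w) else 0) +
                 (if y = u \<and> (u,w) \<in> D then ev f (IminusLam D x w) else 0))"
  by (simp add: je_Some ev_mult ev_add ev_uminus)

lemma ev_je_None: "ev f (jac_entry D None (x,y)) = (\<Sum>k\<in>UNIV. ev f (IminusLam D x k) * ev f (IminusLam D y k))"
  by (simp add: je_None ev_QQ)

lemma ev_f0_IL: "ev f0 (IminusLam D x k) = (if x = k then 1 else 0)"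
  by (simp add: ev_IL f0_def)

lemma v0_None: "ev f0 (jac_entry D None (x,y)) = (if x = y then 1 else 0)"
proof -
  have "ev f0 (jac_entry D None (x,y)) = (\<Sum>k\<in>UNIV. (if x = k \<and> k = y then 1 else 0))"
    unfolding ev_je_None ev_f0_IL by (rule sum.cong) auto
  also have "\<dots> = (if x = y then 1 else 0)" by (simp add: sum_delta_cond)
  finally show ?thesis .
qed

lemma v0_Some:
  assumes "(u,w) \<in> D" "u \<noteq> w" "x \<le> y"
  shows "ev f0 (jac_entry D (Some (u,w)) (x,y)) = - (if (x,y) = ec u w then 1 else 0)"
  using assms unfolding ev_je_Some ev_f0_IL by (auto simp: f0_def ec_def min_def max_def)

lemma ev_fi_IL: "ev (fi i) (IminusLam D x k) = (if x = k then 1 else 0) - (if (x,k) \<in> D \<and> k = i then 1 else 0)"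
  by (auto simp: ev_IL fi_def)

lemma vi_None:
  assumes "x \<noteq> i" "y \<noteq> i"
  shows "ev (fi i) (jac_entry D None (x,y)) =
           (if x = y then 1 else 0) + (if (x,i) \<in> D \<and> (y,i) \<in> D then 1 else 0)"
proof -
  have "ev (fi i) (jac_entry D None (x,y)) =
     (\<Sum>k\<in>UNIV. (if x = y \<and> k = y then 1 else 0) + (if ((x,i) \<in> D \<and> (y,i) \<in> D) \<and> k = i then 1 else 0))"
    unfolding ev_je_None ev_fi_IL by (rule sum.cong) (use assms in auto)
  also have "\<dots> = (if x = y then 1 else 0) + (if (x,i) \<in> D \<and> (y,i) \<in> D then 1 else 0)"
    by (simp only: sum.distrib sum_delta_cond)
  finally show ?thesis .
qed

lemma vi_Some1:
  assumes "(u,w) \<in> D" "u \<noteq> w" "w \<noteq> i" "x \<le> y"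
  shows "ev (fi i) (jac_entry D (Some (u,w)) (x,y)) = - (if (x,y) = ec u w then 1 else 0)"
  using assms unfolding ev_je_Some ev_fi_IL by (auto simp: fi_def ec_def min_def max_def)

lemma vi_Some2:
  assumes "(u,i) \<in> D" "x \<noteq> i" "y \<noteq> i"
  shows "ev (fi i) (jac_entry D (Some (u,i)) (x,y)) =
     (if x = u \<and> (y,i) \<in> D then 1 else 0) + (if y = u \<and> (x,i) \<in> D then 1 else 0)"
  using assms unfolding ev_je_Some ev_fi_IL by (auto simp: fi_def)


lemma jac_indep_iff:
  "jac_indep D S \<longleftrightarrow> S \<subseteq> jac_cols \<and> lin_indep (jac_rows D) S (\<lambda>\<theta> p. to_fract (jac_entry D \<theta> p))"
  by (simp add: jac_indep_def lin_indep_def to_fract_def)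

lemma card_rows: "card (jac_rows (D :: ('v::finite \<times> 'v) set)) = card D + 1"
proof -
  have "card (Some ` D) = card D" by (rule card_image) (simp add: inj_on_def)
  moreover have "None \<notin> Some ` D" by auto
  ultimately show ?thesis by (simp add: jac_rows_def)
qed

lemma not_indep_big:
  fixes D :: "('v::{finite,linorder} \<times> 'v) set"
  assumes "card D + 1 < card S"
  shows "\<not> jac_indep D S"
proof -
  have "\<not> lin_indep (jac_rows D) S (\<lambda>\<theta> p. to_fract (jac_entry D \<theta> p))"
    by (rule lin_dep_card) (use assms card_rows[of D] in auto)
  then show ?thesis by (simp add: jac_indep_iff)
qed

lemma same_sym: "same_jacobian_matroid D1 D2 \<Longrightarrow> same_jacobian_matroid D2 D1"
  by (simp add: same_jacobian_matroid_def)

lemma simple_irrefl: "simple_digraph D \<Longrightarrow> (a,b) \<in> D \<Longrightarrow> a \<noteq> b"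
  by (auto simp: simple_digraph_def)

lemma simple_asym: "simple_digraph D \<Longrightarrow> (a,b) \<in> D \<Longrightarrow> (b,a) \<notin> D"
  by (auto simp: simple_digraph_def)

lemma ec_eq: "ec a b = ec a' b' \<Longrightarrow> (a = a' \<and> b = b') \<or> (a = b' \<and> b = a')"
  by (auto simp: ec_def min_def max_def split: if_splits)

lemma ec_in_cols: "ec a b \<in> jac_cols"
  by (auto simp: ec_def jac_cols_def min_def max_def)

lemma min_less_max: "a \<noteq> b \<Longrightarrow> min a b < max a b" for a b :: "'a::linorder"
  by (auto simp: min_def max_def not_le less_le)

lemma mvar_nz: "mvar x \<noteq> 0"
proof
  assume "mvar x = 0"
  then have "Poly_Mapping.lookup (mvar x) (sx x) = Poly_Mapping.lookup 0 (sx x)" by simp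
  then show False by (simp add: mvar_def)
qed

lemma ec_offdiag: "a \<noteq> b \<Longrightarrow> fst (ec a b) \<noteq> snd (ec a b)"
  by (auto simp: ec_def min_def max_def)

lemma ec_comp: "fst (ec a b) \<in> {a,b}" "snd (ec a b) \<in> {a,b}"
  by (auto simp: ec_def min_def max_def)

lemma inj_ec:
  assumes "simple_digraph D"
  shows "inj_on (\<lambda>(a,b). ec a b) D"
proof (rule inj_onI)
  fix x y assume xy: "x \<in> D" "y \<in> D" "(\<lambda>(a,b). ec a b) x = (\<lambda>(a,b). ec a b) y"
  obtain a b where x: "x = (a,b)" by (cases x)
  obtain a' b' where y: "y = (a',b')" by (cases y)
  from xy x y have "(a = a' \<and> b = b') \<or> (a = b' \<and> b = a')" using ec_eq by auto
  then show "x = y" using xy x y simple_asym[OF assms] by auto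
qed

lemma insert_indep:
  fixes D :: "('v::{finite,linorder} \<times> 'v) set"
  assumes simple: "simple_digraph D" and ic: "(i,c) \<in> D"
    and rest: "\<forall>p\<in>S. fst p \<noteq> i \<and> snd p \<noteq> i"
    and ind: "jac_indep D S"
  shows "jac_indep D (insert (i,i) S)"
proof -
  have ci: "c \<noteq> i" using simple_irrefl[OF simple ic] by simp
  have nS: "(i,i) \<notin> S" using rest by auto
  have Scols: "S \<subseteq> jac_cols" using ind by (simp add: jac_indep_def)
  have zero: "jac_entry D (Some (i,c)) p = 0" if "p \<in> S" for p
  proof -
    obtain a b where p: "p = (a,b)" by (cases p)
    then show ?thesis using rest that by (auto simp: je_Some)
  qed
  have nz: "jac_entry D (Some (i,c)) (i,i) \<noteq> 0"
  proof -
    have "jac_entry D (Some (i,c)) (i,i) = - mvar None * (2 * (0 - mvar (Some (i,c))))"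
      using ic ci by (simp add: je_Some IminusLam_def lam_def)
    also have "\<dots> = 2 * (mvar None * mvar (Some (i,c)))" by (simp add: algebra_simps)
    finally have "jac_entry D (Some (i,c)) (i,i) = 2 * (mvar None * mvar (Some (i,c)))" .
    moreover have "mvar None * mvar (Some (i,c)) \<noteq> 0"
      using mvar_nz[of None] mvar_nz[of "Some (i,c)"] no_zero_divisors by blast
    ultimately show ?thesis by simp
  qed
  show ?thesis unfolding jac_indep_def
  proof (intro conjI allI impI)
    show "insert (i,i) S \<subseteq> jac_cols" using Scols by (simp add: jac_cols_def)
  next
    fix cf :: "'v \<times> 'v \<Rightarrow> ('v \<times> 'v) option mpoly fract"
    assume rel: "\<forall>\<theta>\<in>jac_rows D. (\<Sum>p\<in>insert (i,i) S. cf p * Fract (jac_entry D \<theta> p) 1) = 0"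
    have split: "(\<Sum>p\<in>insert (i,i) S. cf p * Fract (jac_entry D \<theta> p) 1) =
        cf (i,i) * Fract (jac_entry D \<theta> (i,i)) 1 + (\<Sum>p\<in>S. cf p * Fract (jac_entry D \<theta> p) 1)" for \<theta>
      using nS by simp
    have "Some (i,c) \<in> jac_rows D" using ic by (simp add: jac_rows_def)
    have f00: "Fract (0 :: ('v \<times> 'v) option mpoly) 1 = 0" by (simp add: Zero_fract_def)
    have s0: "(\<Sum>p\<in>S. cf p * Fract (jac_entry D (Some (i,c)) p) 1) = 0"
      using zero f00 by simp
    have "cf (i,i) * Fract (jac_entry D (Some (i,c)) (i,i)) 1 = 0"
      using rel split[of "Some (i,c)"] s0 \<open>Some (i,c) \<in> jac_rows D\<close> by simp
    moreover have "Fract (jac_entry D (Some (i,c)) (i,i)) 1 \<noteq> 0"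
      using nz by (simp add: eq_fract Zero_fract_def)
    ultimately have c0: "cf (i,i) = 0" by simp
    have "\<forall>\<theta>\<in>jac_rows D. (\<Sum>p\<in>S. cf p * Fract (jac_entry D \<theta> p) 1) = 0"
      using rel split c0 by simp
    then have "\<forall>p\<in>S. cf p = 0" using ind unfolding jac_indep_def by blast
    then show "\<forall>p\<in>insert (i,i) S. cf p = 0" using c0 by simp
  qed
qed

lemma card_edges:
  fixes D :: "('v::{finite,linorder} \<times> 'v) set"
  assumes simple: "simple_digraph D"
  shows "card D \<le> card {p::'v\<times>'v. fst p < snd p}"
    and "\<not> complete_digraph D \<Longrightarrow> card D < card {p::'v\<times>'v. fst p < snd p}"
    and "complete_digraph D \<Longrightarrow> card D = card {p::'v\<times>'v. fst p < snd p}"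
proof -
  let ?g = "\<lambda>(a,b). ec a b" and ?U = "{p::'v\<times>'v. fst p < snd p}"
  have inj: "inj_on ?g D" by (rule inj_ec[OF simple])
  have cD: "card (?g ` D) = card D" by (rule card_image[OF inj])
  have sub: "?g ` D \<subseteq> ?U"
    using simple_irrefl[OF simple] min_less_max by (fastforce simp: ec_def)
  show "card D \<le> card ?U" using card_mono[OF _ sub] cD by simp
  show "card D < card ?U" if nc: "\<not> complete_digraph D"
  proof -
    from nc obtain u v where uv: "u \<noteq> v" "(u,v) \<notin> D" "(v,u) \<notin> D"
      by (auto simp: complete_digraph_def)
    have "ec u v \<in> ?U" using uv by (auto simp: ec_def min_def max_def)
    moreover have "ec u v \<notin> ?g ` D"
    proof
      assume "ec u v \<in> ?g ` D"
      then obtain a b where "(a,b) \<in> D" "ec u v = ec a b" by auto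
      then show False using ec_eq uv by blast
    qed
    ultimately have "?g ` D \<subset> ?U" using sub by blast
    then have "card (?g ` D) < card ?U" by (rule psubset_card_mono[OF finite])
    then show ?thesis using cD by simp
  qed
  show "card D = card ?U" if c: "complete_digraph D"
  proof -
    have "?U \<subseteq> ?g ` D"
    proof
      fix x assume "x \<in> ?U"
      then obtain a b where x: "x = (a,b)" "a < b" by (cases x) auto
      then have "(a,b) \<in> D \<or> (b,a) \<in> D" using c by (auto simp: complete_digraph_def)
      moreover have "ec a b = (a,b)" "ec b a = (a,b)" using x by (auto simp: ec_def)
      ultimately show "x \<in> ?g ` D" using x by force
    qed
    then have "?g ` D = ?U" using sub by blast
    then show ?thesis using cD by simp
  qed
qed


lemma full_rank:
  fixes D :: "('v::{finite,linorder} \<times> 'v) set"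
  assumes simple: "simple_digraph D"
  shows "\<exists>S. jac_indep D S \<and> card S = card D + 1"
proof -
  obtain a0 :: 'v where True by simp
  define A1 where "A1 = (\<lambda>(a,b). ec a b) ` D"
  define S where "S = insert (a0,a0) A1"
  have offd: "fst p \<noteq> snd p" if "p \<in> A1" for p
    using that simple_irrefl[OF simple] ec_offdiag unfolding A1_def by fastforce
  have nA: "(a0,a0) \<notin> A1" using offd by fastforce
  have cA1: "card A1 = card D" unfolding A1_def by (rule card_image[OF inj_ec[OF simple]])
  have cS: "card S = card D + 1" using nA cA1 by (simp add: S_def)
  have "A1 \<subseteq> jac_cols" unfolding A1_def using ec_in_cols by auto
  then have Scols: "S \<subseteq> jac_cols" unfolding S_def by (simp add: jac_cols_def)
  have ind_real: "lin_indep (jac_rows D) S (\<lambda>\<theta> p. ev f0 (jac_entry D \<theta> p))"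
    unfolding lin_indep_def
  proof (intro allI impI)
    fix c :: "'v \<times> 'v \<Rightarrow> real"
    assume rel: "\<forall>\<theta>\<in>jac_rows D. (\<Sum>p\<in>S. c p * ev f0 (jac_entry D \<theta> p)) = 0"
    have e0: "c (ec u w) = 0" if uwD: "(u,w) \<in> D" for u w
    proof -
      have uw: "u \<noteq> w" using simple_irrefl[OF simple uwD] .
      have inS: "ec u w \<in> S" using uwD by (force simp: S_def A1_def)
      have "(\<Sum>p\<in>S. c p * ev f0 (jac_entry D (Some (u,w)) p)) = (\<Sum>p\<in>S. (if p = ec u w then - c p else 0))"
      proof (rule sum.cong[OF refl])
        fix p assume "p \<in> S"
        then have le: "fst p \<le> snd p" using Scols by (auto simp: jac_cols_def)
        obtain x y where p: "p = (x,y)" by (cases p)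
        show "c p * ev f0 (jac_entry D (Some (u,w)) p) = (if p = ec u w then - c p else 0)"
          using v0_Some[OF uwD uw, of x y] le p by simp
      qed
      also have "\<dots> = - c (ec u w)" using inS by (simp add: sum.delta)
      finally show ?thesis using rel uwD by (simp add: jac_rows_def)
    qed
    have d0: "c (a0,a0) = 0"
    proof -
      have "(\<Sum>p\<in>S. c p * ev f0 (jac_entry D None p)) = (\<Sum>p\<in>S. (if p = (a0,a0) then c p else 0))"
      proof (rule sum.cong[OF refl])
        fix p assume pS: "p \<in> S"
        obtain x y where p: "p = (x,y)" by (cases p)
        show "c p * ev f0 (jac_entry D None p) = (if p = (a0,a0) then c p else 0)"
          using pS offd[of p] p by (auto simp: v0_None S_def)
      qed
      also have "\<dots> = c (a0,a0)" by (simp add: sum.delta S_def)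
      finally show ?thesis using rel by (simp add: jac_rows_def)
    qed
    show "\<forall>p\<in>S. c p = 0"
      using d0 e0 unfolding S_def A1_def by auto
  qed
  have "lin_indep (jac_rows D) S (\<lambda>\<theta> p. to_fract (jac_entry D \<theta> p))"
    by (rule lin_indep_specialize[where h = "ev f0" and w = "jac_entry D", OF ev_hom _ _ _ ind_real])
       (simp_all add: card_rows cS)
  then show ?thesis using Scols cS by (auto simp: jac_indep_iff)
qed


lemma sink_rank:
  fixes D :: "('v::{finite,linorder} \<times> 'v) set"
  assumes simple: "simple_digraph D" and nc: "\<not> complete_digraph D" and sink: "i \<in> sinks D"
  shows "\<exists>S. jac_indep D S \<and> card S = card D + 1 \<and> (\<forall>p\<in>S. fst p \<noteq> i \<and> snd p \<noteq> i)"
proof -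
  have noout: "(i,b) \<notin> D" for b using sink by (simp add: sinks_def)
  define P where "P = {a. (a,i) \<in> D}"
  define E1 where "E1 = {e \<in> D. snd e \<noteq> i}"
  define A1 where "A1 = (\<lambda>(a,b). ec a b) ` E1"
  define A2 where "A2 = (\<lambda>a. (a,a)) ` P"
  have Pi: "a \<noteq> i" if "a \<in> P" for a using that noout by (auto simp: P_def)
  have cardD: "card D = card E1 + card P"
  proof -
    have eq: "D = E1 \<union> (\<lambda>a. (a,i)) ` P" by (auto simp: E1_def P_def)
    have "card ((\<lambda>a. (a,i)) ` P) = card P" by (rule card_image) (simp add: inj_on_def)
    moreover have "E1 \<inter> (\<lambda>a. (a,i)) ` P = {}" by (auto simp: E1_def)
    ultimately show ?thesis by (subst eq, subst card_Un_disjoint) auto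
  qed
  have cA1: "card A1 = card E1" unfolding A1_def
    by (rule card_image) (rule inj_on_subset[OF inj_ec[OF simple]], auto simp: E1_def)
  have cA2: "card A2 = card P" unfolding A2_def by (rule card_image) (simp add: inj_on_def)
  have offd: "fst p \<noteq> snd p" if "p \<in> A1" for p
    using that simple_irrefl[OF simple] ec_offdiag unfolding A1_def E1_def by fastforce
  have nd: "(a,a) \<notin> A1" for a using offd[of "(a,a)"] by auto
  have dis: "A1 \<inter> A2 = {}" using nd by (auto simp: A2_def)
  have A1rest: "fst p \<noteq> i \<and> snd p \<noteq> i" if "p \<in> A1" for p
  proof -
    from that obtain a b where ab: "(a,b) \<in> E1" "p = ec a b" by (auto simp: A1_def)
    then have "a \<noteq> i" "b \<noteq> i" using noout by (auto simp: E1_def)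
    then show ?thesis using ec_comp[of a b] ab by auto
  qed
  have A2rest: "fst p \<noteq> i \<and> snd p \<noteq> i" if "p \<in> A2" for p using that Pi by (fastforce simp: A2_def)
  have A1cols: "A1 \<subseteq> jac_cols" unfolding A1_def using ec_in_cols by auto
  have A2cols: "A2 \<subseteq> jac_cols" unfolding A2_def by (auto simp: jac_cols_def)
  obtain x0 where x0n: "x0 \<notin> A1" "x0 \<notin> A2" and x0c: "x0 \<in> jac_cols" and x0r: "fst x0 \<noteq> i" "snd x0 \<noteq> i"
    and hx: "(\<exists>a0. x0 = (a0,a0) \<and> a0 \<notin> P) \<or> (\<exists>u v. x0 = ec u v \<and> u \<noteq> v \<and> u \<in> P \<and> v \<in> P)"
  proof (cases "\<exists>a0. a0 \<noteq> i \<and> (a0,i) \<notin> D")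
    case True
    then obtain a0 where a0: "a0 \<noteq> i" "(a0,i) \<notin> D" by blast
    show ?thesis
    proof (rule that[of "(a0,a0)"])
      show "(a0,a0) \<notin> A1" using offd by fastforce
      show "(a0,a0) \<notin> A2" using a0 by (auto simp: A2_def P_def)
    qed (use a0 in \<open>auto simp: jac_cols_def P_def\<close>)
  next
    case False
    then have allP: "a \<noteq> i \<Longrightarrow> (a,i) \<in> D" for a by blast
    from nc obtain u v where uv: "u \<noteq> v" "(u,v) \<notin> D" "(v,u) \<notin> D"
      by (auto simp: complete_digraph_def)
    have ui: "u \<noteq> i" using uv allP[of v] by auto
    have vi: "v \<noteq> i" using uv allP[of u] by auto
    have uP: "u \<in> P" "v \<in> P" using allP ui vi by (auto simp: P_def)
    show ?thesis
    proof (rule that[of "ec u v"])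
      show "ec u v \<notin> A1"
      proof
        assume "ec u v \<in> A1"
        then obtain a b where "(a,b) \<in> D" "ec u v = ec a b" by (auto simp: A1_def E1_def)
        then show False using ec_eq uv by blast
      qed
      show "ec u v \<notin> A2" using ec_offdiag[OF uv(1)] by (auto simp: A2_def)
      show "ec u v \<in> jac_cols" by (rule ec_in_cols)
      show "fst (ec u v) \<noteq> i" "snd (ec u v) \<noteq> i" using ec_comp[of u v] ui vi by auto
      show "(\<exists>a0. ec u v = (a0,a0) \<and> a0 \<notin> P) \<or> (\<exists>u' v'. ec u v = ec u' v' \<and> u' \<noteq> v' \<and> u' \<in> P \<and> v' \<in> P)"
        using uv uP by blast
    qed
  qed
  define S where "S = insert x0 (A1 \<union> A2)"
  have cS: "card S = card D + 1" using x0n dis cA1 cA2 cardD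
    by (simp add: S_def card_Un_disjoint)
  have Scols: "S \<subseteq> jac_cols" using A1cols A2cols x0c by (auto simp: S_def)
  have Srest: "\<forall>p\<in>S. fst p \<noteq> i \<and> snd p \<noteq> i" using A1rest A2rest x0r by (auto simp: S_def)
  have ind_real: "lin_indep (jac_rows D) S (\<lambda>\<theta> p. ev (fi i) (jac_entry D \<theta> p))"
    unfolding lin_indep_def
  proof (intro allI impI)
    fix c :: "'v \<times> 'v \<Rightarrow> real"
    assume rel: "\<forall>\<theta>\<in>jac_rows D. (\<Sum>p\<in>S. c p * ev (fi i) (jac_entry D \<theta> p)) = 0"
    have e0: "c (ec u w) = 0" if uwE: "(u,w) \<in> E1" for u w
    proof -
      have uwD: "(u,w) \<in> D" and wi: "w \<noteq> i" using uwE by (auto simp: E1_def)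
      have uw: "u \<noteq> w" using simple_irrefl[OF simple uwD] .
      have inS: "ec u w \<in> S" using uwE by (force simp: S_def A1_def)
      have "(\<Sum>p\<in>S. c p * ev (fi i) (jac_entry D (Some (u,w)) p)) = (\<Sum>p\<in>S. (if p = ec u w then - c p else 0))"
      proof (rule sum.cong[OF refl])
        fix p assume "p \<in> S"
        then have le: "fst p \<le> snd p" using Scols by (auto simp: jac_cols_def)
        obtain x y where p: "p = (x,y)" by (cases p)
        show "c p * ev (fi i) (jac_entry D (Some (u,w)) p) = (if p = ec u w then - c p else 0)"
          using vi_Some1[OF uwD uw wi, of x y] le p by simp
      qed
      also have "\<dots> = - c (ec u w)" using inS by (simp add: sum.delta)
      finally show ?thesis using rel uwD by (simp add: jac_rows_def)
    qed
    have cA1z: "c p = 0" if "p \<in> A1" for p using that e0 by (auto simp: A1_def)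
    have decomp: "(\<Sum>p\<in>S. c p * g p) = c x0 * g x0 + (\<Sum>a\<in>P. c (a,a) * g (a,a))" for g
    proof -
      have "(\<Sum>p\<in>S. c p * g p) = c x0 * g x0 + ((\<Sum>p\<in>A1. c p * g p) + (\<Sum>p\<in>A2. c p * g p))"
        using x0n dis by (simp add: S_def sum.union_disjoint)
      also have "(\<Sum>p\<in>A1. c p * g p) = 0" using cA1z by simp
      also have "(\<Sum>p\<in>A2. c p * g p) = (\<Sum>a\<in>P. c (a,a) * g (a,a))"
        unfolding A2_def by (subst sum.reindex) (auto simp: inj_on_def)
      finally show ?thesis by simp
    qed
    have row2: "c x0 * ev (fi i) (jac_entry D (Some (a,i)) x0) + 2 * c (a,a) = 0" if aP: "a \<in> P" for a
    proof -
      have aiD: "(a,i) \<in> D" using aP by (simp add: P_def)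
      have "(\<Sum>b\<in>P. c (b,b) * ev (fi i) (jac_entry D (Some (a,i)) (b,b))) = (\<Sum>b\<in>P. (if b = a then 2 * c (b,b) else 0))"
      proof (rule sum.cong[OF refl])
        fix b assume bP: "b \<in> P"
        then show "c (b,b) * ev (fi i) (jac_entry D (Some (a,i)) (b,b)) = (if b = a then 2 * c (b,b) else 0)"
          using vi_Some2[OF aiD Pi[OF bP] Pi[OF bP]] by (simp add: P_def)
      qed
      also have "\<dots> = 2 * c (a,a)" using aP by (simp add: sum.delta)
      finally show ?thesis using rel aiD decomp[of "\<lambda>p. ev (fi i) (jac_entry D (Some (a,i)) p)"]
        by (simp add: jac_rows_def)
    qed
    have rowN: "c x0 * ev (fi i) (jac_entry D None x0) + 2 * (\<Sum>b\<in>P. c (b,b)) = 0"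
    proof -
      have "(\<Sum>b\<in>P. c (b,b) * ev (fi i) (jac_entry D None (b,b))) = (\<Sum>b\<in>P. 2 * c (b,b))"
      proof (rule sum.cong[OF refl])
        fix b assume bP: "b \<in> P"
        then show "c (b,b) * ev (fi i) (jac_entry D None (b,b)) = 2 * c (b,b)"
          using vi_None[OF Pi[OF bP] Pi[OF bP]] by (simp add: P_def)
      qed
      then show ?thesis using rel decomp[of "\<lambda>p. ev (fi i) (jac_entry D None p)"]
        by (simp add: jac_rows_def sum_distrib_left)
    qed
    have allz: "c x0 = 0 \<and> (\<forall>a\<in>P. c (a,a) = 0)"
      using hx
    proof
      assume "\<exists>a0. x0 = (a0,a0) \<and> a0 \<notin> P"
      then obtain a0 where a0: "x0 = (a0,a0)" "a0 \<notin> P" by blast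
      have a0i: "a0 \<noteq> i" using x0r a0 by simp
      have "ev (fi i) (jac_entry D (Some (a,i)) x0) = 0" if "a \<in> P" for a
        using vi_Some2[of a i D a0 a0] that a0 a0i by (simp add: P_def)
      then have cz: "\<forall>a\<in>P. c (a,a) = 0" using row2 by simp
      have "ev (fi i) (jac_entry D None x0) = 1" using vi_None[OF a0i a0i] a0 by (simp add: P_def)
      then have "c x0 = 0" using rowN cz by simp
      then show ?thesis using cz by simp
    next
      assume "\<exists>u v. x0 = ec u v \<and> u \<noteq> v \<and> u \<in> P \<and> v \<in> P"
      then obtain u v where uv: "x0 = ec u v" "u \<noteq> v" "u \<in> P" "v \<in> P" by blast
      obtain x y where xy: "x0 = (x,y)" by (cases x0)
      have xyuv: "(x = u \<and> y = v) \<or> (x = v \<and> y = u)" using uv(1) xy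
        by (auto simp: ec_def min_def max_def split: if_splits)
      have xi: "x \<noteq> i" "y \<noteq> i" using x0r xy by auto
      have xyP: "(x,i) \<in> D" "(y,i) \<in> D" using xyuv uv by (auto simp: P_def)
      have xney: "x \<noteq> y" using xyuv uv by auto
      have g2: "ev (fi i) (jac_entry D (Some (a,i)) x0) = (if a = u then 1 else 0) + (if a = v then 1 else 0)"
        if "a \<in> P" for a
        using vi_Some2[of a i D x y] that xy xi xyP xyuv uv(2) by (auto simp: P_def)
      have gN: "ev (fi i) (jac_entry D None x0) = 1" using vi_None[OF xi] xy xyP xney by simp
      have cz: "c (a,a) = 0" if "a \<in> P" "a \<noteq> u" "a \<noteq> v" for a
        using row2[OF that(1)] g2[OF that(1)] that by simp
      have ru: "c x0 + 2 * c (u,u) = 0" using row2[OF uv(3)] g2[OF uv(3)] uv(2) by simp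
      have rv: "c x0 + 2 * c (v,v) = 0" using row2[OF uv(4)] g2[OF uv(4)] uv(2) by simp
      have "(\<Sum>b\<in>P. c (b,b)) = (\<Sum>b\<in>P. (if b = u then c (u,u) else 0) + (if b = v then c (v,v) else 0))"
        by (rule sum.cong[OF refl]) (use cz uv(2) in auto)
      also have "\<dots> = c (u,u) + c (v,v)" using uv by (simp add: sum.distrib sum.delta)
      finally have "c x0 + 2 * (c (u,u) + c (v,v)) = 0" using rowN gN by simp
      then have c0: "c x0 = 0" using ru rv by simp
      then have "c (u,u) = 0" "c (v,v) = 0" using ru rv by auto
      then show ?thesis using c0 cz by blast
    qed
    show "\<forall>p\<in>S. c p = 0" using allz cA1z by (auto simp: S_def A2_def)
  qed
  have "lin_indep (jac_rows D) S (\<lambda>\<theta> p. to_fract (jac_entry D \<theta> p))"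
    by (rule lin_indep_specialize[where h = "ev (fi i)" and w = "jac_entry D", OF ev_hom _ _ _ ind_real])
       (simp_all add: card_rows cS)
  then show ?thesis using Scols cS Srest by (auto simp: jac_indep_iff)
qed


lemma complete_transfer:
  fixes D1 D2 :: "('v::{finite,linorder} \<times> 'v) set"
  assumes same: "same_jacobian_matroid D1 D2" and s1: "simple_digraph D1" and s2: "simple_digraph D2"
    and c2: "complete_digraph D2"
  shows "complete_digraph D1"
proof (rule ccontr)
  assume nc1: "\<not> complete_digraph D1"
  obtain S where S: "jac_indep D2 S" "card S = card D2 + 1" using full_rank[OF s2] by blast
  have "card D1 < card D2" using card_edges(2)[OF s1 nc1] card_edges(3)[OF s2 c2] by simp
  then have "\<not> jac_indep D1 S" using S(2) by (intro not_indep_big) simp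
  moreover have "jac_indep D1 S" using S(1) same by (simp add: same_jacobian_matroid_def)
  ultimately show False by simp
qed

lemma sinks_sub:
  fixes D1 D2 :: "('v::{finite,linorder} \<times> 'v) set"
  assumes same: "same_jacobian_matroid D1 D2" and s1: "simple_digraph D1" and s2: "simple_digraph D2"
    and nc1: "\<not> complete_digraph D1"
  shows "sinks D1 \<subseteq> sinks D2"
proof
  fix i assume i: "i \<in> sinks D1"
  show "i \<in> sinks D2"
  proof (rule ccontr)
    assume "i \<notin> sinks D2"
    then obtain c where ic: "(i,c) \<in> D2" by (auto simp: sinks_def)
    obtain S where S: "jac_indep D1 S" "card S = card D1 + 1" "\<forall>p\<in>S. fst p \<noteq> i \<and> snd p \<noteq> i"
      using sink_rank[OF s1 nc1 i] by blast
    have "jac_indep D2 S" using S(1) same by (simp add: same_jacobian_matroid_def)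
    then have "jac_indep D2 (insert (i,i) S)" by (rule insert_indep[OF s2 ic S(3)])
    then have ind1: "jac_indep D1 (insert (i,i) S)" using same by (simp add: same_jacobian_matroid_def)
    have "(i,i) \<notin> S" using S(3) by auto
    then have "card (insert (i,i) S) = card D1 + 2" using S(2) by simp
    then have "\<not> jac_indep D1 (insert (i,i) S)" by (intro not_indep_big) simp
    with ind1 show False by simp
  qed
qed

theorem corollary4p6:
  fixes D1 D2 :: "('v::{finite,linorder} \<times> 'v) set"
  assumes "simple_digraph D1" and "simple_digraph D2"
    and "same_jacobian_matroid D1 D2"
    and "\<not> complete_digraph D1 \<or> \<not> complete_digraph D2"
  shows "sinks D1 = sinks D2"
proof -
  have nc1: "\<not> complete_digraph D1"
    using complete_transfer[OF same_sym[OF assms(3)] assms(2) assms(1)] assms(4) by blast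
  have nc2: "\<not> complete_digraph D2"
    using complete_transfer[OF assms(3) assms(1) assms(2)] assms(4) by blast
  show ?thesis
    using sinks_sub[OF assms(3) assms(1) assms(2) nc1]
          sinks_sub[OF same_sym[OF assms(3)] assms(2) assms(1) nc2] by blast
qed

end
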